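(* The loss of information about the receiver's orientation due to the nuisance parameters is $$\mathbf G(\boldsymbol\Phi_U,\boldsymbol\Phi_U)=\sum_b\frac{\mathbf a_b\mathbf a_b^T}{\sum_{u,k}\mathrm{SNR}_{bu,k}\omega_{bU,k}}+\frac{\mathbf a_Q\mathbf a_Q^T}{\sum_{q,u,k}\mathrm{SNR}_{qu,k}\omega_{qU,k}},$$ where $\mathbf a_b=\sum_{k,u}\mathrm{SNR}_{bu,k}\,\omega_{bU,k}\nabla_{\boldsymbol\Phi_U}\tau_{bu,k}$ and $\mathbf a_Q=\sum_{q,k,u}\mathrm{SNR}_{qu,k}\,\omega_{qU,k}\nabla_{\boldsymbol\Phi_U}\tau_{qu,k}$.
   Context: System: $N_B$ single-antenna LEO satellites indexed by $b$, $N_Q$ mutually synchronized single-antenna base stations (BSs) indexed by $q$, and a receiver with $N_U$ antennas indexed by $u$; transmissions occur in $N_K$ slots indexed by $k$, spaced $\Delta_t$ apart; $c$ is the speed of light, $f_c$ the carrier frequency. Receiver antenna $u$ is at $\mathbf p_{u,k}=\mathbf p_{U,0}+k\Delta_t\mathbf v_{U,0}+\mathbf Q(\boldsymbol\Phi_U)\tilde{\mathbf s}_u$, with $\mathbf Q(\boldsymbol\Phi_U)$ the 3D rotation matrix for orientation angles $\boldsymbol\Phi_U=[\alpha_U,\psi_U,\varphi_U]^T$ and $\tilde{\mathbf s}_u$ a known offset. LEO $b$ has known nominal position/velocity $\mathbf p_{b,k},\mathbf v_{b,k}$ and unknown constant position offset $\check{\mathbf p}_{b,0}$ and velocity offset $\check{\mathbf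 v}_{b,0}$; BSs are static and known. $\boldsymbol\Delta_{xy,k}$ is the unit vector from entity $x$ to entity $y$ at slot $k$ ($U$: receiver centroid, $u$: antenna $u$). Channel parameters: LEO–receiver link: delays $\tau_{bu,k}$, Dopplers $\nu_{bU,k}=\boldsymbol\Delta_{bU,k}^T(\mathbf v_{b,k}+\check{\mathbf v}_{b,0}-\mathbf v_{U,0})/c$, gains, time offset $\delta_{bU}$, frequency offset $\epsilon_{bU}$; BS–receiver link: delays $\tau_{qu,k}$, Dopplers $\nu_{qU,k}=-\boldsymbol\Delta_{qU,k}^T\mathbf v_{U,0}/c$, gains, common offsets $\delta_{QU},\epsilon_{QU}$; LEO–BS link: delays $\tau_{bq,k}$, Dopplers $\nu_{bq,k}=\boldsymbol\Delta_{bq,k}^T(\mathbf v_{b,k}+\check{\mathbf v}_{b,0})/c$, gains, offsets $\delta_{bQ},\epsilon_{bQ}$. $\mathrm{SNR}_{bu,k},\mathrm{SNR}_{qu,k},\mathrm{SNR}_{bq,k}$ are the received SNRs; $\alpha_{obu,k},\alpha_{oqu,k},\alpha_{obq,k}$ the RMS time durations; $\alpha_{1x,k},\alpha_{2x,k}$ the effective baseband bandwidth and baseband–carrier correlation of transmitter $x$; $f_{obU,k}=f_c(1-\nu_{bU,k})+\epsilon_{bU}$, $f_{oqU,k}=f_c(1-\nu_{qU,k})+\epsilon_{QU}$, $f_{obq,k}=f_c(1-\nu_{bq,k})+\epsilon_{bQ}$, and $\omega_{bU,k}=\alpha_{1b,k}^2+2f_{obU,k}\alpha_{1b,k}\alpha_{2b,k}+f_{obU,k}^2$,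 $\omega_{qU,k}=\alpha_{1q,k}^2+2f_{oqU,k}\alpha_{1q,k}\alpha_{2q,k}+f_{oqU,k}^2$, $\omega_{bq,k}=\alpha_{1q,k}^2+2f_{obq,k}\alpha_{1q,k}\alpha_{2q,k}+f_{obq,k}^2$. Channel-parameter FIM (links mutually independent, contributions additive): each observation (antenna $u$, slot $k$, LEO $b$) contributes $F(\tau_{bu,k},\tau_{bu,k})=F(\delta_{bU},\delta_{bU})=-F(\tau_{bu,k},\delta_{bU})=\mathrm{SNR}_{bu,k}\omega_{bU,k}$, $F(\nu_{bU,k},\nu_{bU,k})=\tfrac12\mathrm{SNR}_{bu,k}f_c^2\alpha_{obu,k}^2$, $F(\nu_{bU,k},\epsilon_{bU})=-\tfrac12\mathrm{SNR}_{bu,k}f_c\alpha_{obu,k}^2$, $F(\epsilon_{bU},\epsilon_{bU})=\tfrac12\mathrm{SNR}_{bu,k}\alpha_{obu,k}^2$, a gain-only diagonal term, and all other entries zero; the BS–receiver (indices $qu,k$, offsets $\delta_{QU},\epsilon_{QU}$, $\omega_{qU,k},\alpha_{oqu,k}$) and LEO–BS (indices $bq,k$, offsets $\delta_{bQ},\epsilon_{bQ}$, $\omega_{bq,k},\alpha_{obq,k}$) links are analogous. Location FIM: $\mathbf J_{\boldsymbol\kappa}=\boldsymbol\Upsilon\mathbf J_{\boldsymbol\eta}\boldsymbol\Upsilon^T$ where $\boldsymbol\Upsilon$ is the Jacobian with nonzero derivatives $\nabla_{\mathbf p_{U,0}}\tau_{bu,k}=\boldsymbol\Delta_{bu,k}/c$,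 $\nabla_{\mathbf p_{U,0}}\tau_{qu,k}=\boldsymbol\Delta_{qu,k}/c$, $\nabla_{\check{\mathbf p}_{b,0}}\tau_{bu,k}=-\boldsymbol\Delta_{bu,k}/c$, $\nabla_{\check{\mathbf p}_{b,0}}\tau_{bq,k}=-\boldsymbol\Delta_{bq,k}/c$, $\nabla_{\mathbf v_{U,0}}\tau_{bu,k}=k\Delta_t\boldsymbol\Delta_{bu,k}/c$, $\nabla_{\mathbf v_{U,0}}\tau_{qu,k}=k\Delta_t\boldsymbol\Delta_{qu,k}/c$, $\nabla_{\check{\mathbf v}_{b,0}}\tau_{bu,k}=-k\Delta_t\boldsymbol\Delta_{bu,k}/c$, $\nabla_{\check{\mathbf v}_{b,0}}\tau_{bq,k}=-k\Delta_t\boldsymbol\Delta_{bq,k}/c$, $\nabla_{\mathbf v_{U,0}}\nu_{bU,k}=-\boldsymbol\Delta_{bU,k}/c$, $\nabla_{\mathbf v_{U,0}}\nu_{qU,k}=-\boldsymbol\Delta_{qU,k}/c$, $\nabla_{\check{\mathbf v}_{b,0}}\nu_{bU,k}=\boldsymbol\Delta_{bU,k}/c$, $\nabla_{\check{\mathbf v}_{b,0}}\nu_{bq,k}=\boldsymbol\Delta_{bq,k}/c$, $\nabla_{\boldsymbol\Phi_U}\tau_{xu,k}=\frac1c[\boldsymbol\Delta_{xu,k}^T\partial_{\alpha_U}\mathbf Q\tilde{\mathbf s}_u,\boldsymbol\Delta_{xu,k}^T\partial_{\psi_U}\mathbf Q\tilde{\mathbf s}_u,\boldsymbol\Delta_{xu,k}^T\partial_{\varphi_U}\mathbf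 Q\tilde{\mathbf s}_u]^T$ ($x\in\{b,q\}$), the Doppler position-gradients $\nabla_{\mathbf p_{U,0}}\nu_{bU,k},\nabla_{\mathbf p_{U,0}}\nu_{qU,k},\nabla_{\check{\mathbf p}_{b,0}}\nu_{bU,k},\nabla_{\check{\mathbf p}_{b,0}}\nu_{bq,k}$, and identity on gains and offsets. $\mathbf F(\mathbf x,\mathbf y)$ denotes the block of $\mathbf J_{\boldsymbol\kappa}$ for sub-vectors $\mathbf x,\mathbf y$. Information loss: split $\boldsymbol\kappa=(\boldsymbol\kappa_1,\boldsymbol\kappa_2)$ with $\boldsymbol\kappa_1=(\mathbf p_{U,0},\mathbf v_{U,0},\boldsymbol\Phi_U,\{\check{\mathbf p}_{b,0}\},\{\check{\mathbf v}_{b,0}\})$ and nuisance $\boldsymbol\kappa_2$ = all channel gains and all time/frequency offsets $\delta_{bU},\epsilon_{bU},\delta_{QU},\epsilon_{QU},\delta_{bQ},\epsilon_{bQ}$. The loss matrix is $\mathbf J^{nu}=\mathbf J_{\boldsymbol\kappa_1,\boldsymbol\kappa_2}\mathbf J_{\boldsymbol\kappa_2}^{-1}\mathbf J_{\boldsymbol\kappa_1,\boldsymbol\kappa_2}^T$ (so the equivalent FIM is $\mathbf J_{\boldsymbol\kappa_1}-\mathbf J^{nu}$), and $\mathbf G(\mathbf x,\mathbf y)$ denotes its block for sub-vectors $\mathbf x,\mathbf y$. *)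

theory Defs
  imports "HOL-Analysis.Analysis"
begin

text \<open>Indices: b = LEO, q = BS, u = receiver antenna, k = slot (all nat, bounded by
  NB, NQ, NU, NK).  Spatial components are indexed by the type 3.\<close>

datatype par =
    PU "3"                 (* p_{U,0} component *)
  | VU "3"                 (* v_{U,0} component *)
  | PhiU "3"               (* Phi_U = [alpha_U, psi_U, varphi_U] component *)
  | Pb nat "3"             (* position offset of LEO b *)
  | Vb nat "3"             (* velocity offset of LEO b *)
  | GbU nat nat nat        (* gain, LEO b -> antenna u, slot k *)
  | GqU nat nat nat        (* gain, BS q -> antenna u, slot k *)
  | Gbq nat nat nat        (* gain, LEO b -> BS q, slot k *)
  | DbU nat | EbU nat
  | DQU | EQU
  | DbQ nat | EbQ nat
  | TbU nat nat nat        (* tau_{bu,k}  (b u k) *)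
  | NbU nat nat            (* nu_{bU,k}   (b k) *)
  | TqU nat nat nat        (* tau_{qu,k}  (q u k) *)
  | NqU nat nat            (* nu_{qU,k}   (q k) *)
  | Tbq nat nat nat        (* tau_{bq,k}  (b q k) *)
  | Nbq nat nat nat        (* nu_{bq,k}   (b q k) *)

record sysdata =
  NB :: nat  NQ :: nat  NU :: nat  NK :: nat
  cl :: real              (* speed of light *)
  fc :: real              (* carrier frequency *)
  dt :: real              (* slot spacing Delta_t *)
  snr_bu :: "nat \<Rightarrow> nat \<Rightarrow> nat \<Rightarrow> real"   (* b u k *)
  snr_qu :: "nat \<Rightarrow> nat \<Rightarrow> nat \<Rightarrow> real"   (* q u k *)
  snr_bq :: "nat \<Rightarrow> nat \<Rightarrow> nat \<Rightarrow> real"   (* b q k *)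
  ao_bu :: "nat \<Rightarrow> nat \<Rightarrow> nat \<Rightarrow> real"    (* RMS durations alpha_{obu,k} *)
  ao_qu :: "nat \<Rightarrow> nat \<Rightarrow> nat \<Rightarrow> real"
  ao_bq :: "nat \<Rightarrow> nat \<Rightarrow> nat \<Rightarrow> real"
  a1b :: "nat \<Rightarrow> nat \<Rightarrow> real"  a2b :: "nat \<Rightarrow> nat \<Rightarrow> real"   (* b k *)
  a1q :: "nat \<Rightarrow> nat \<Rightarrow> real"  a2q :: "nat \<Rightarrow> nat \<Rightarrow> real"   (* q k *)
  fo_bU :: "nat \<Rightarrow> nat \<Rightarrow> real"            (* b k *)
  fo_qU :: "nat \<Rightarrow> nat \<Rightarrow> real"            (* q k *)
  fo_bq :: "nat \<Rightarrow> nat \<Rightarrow> nat \<Rightarrow> real"    (* b q k *)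
  gt_bu :: "nat \<Rightarrow> nat \<Rightarrow> nat \<Rightarrow> real"    (* gain-only diagonal FIM terms *)
  gt_qu :: "nat \<Rightarrow> nat \<Rightarrow> nat \<Rightarrow> real"
  gt_bq :: "nat \<Rightarrow> nat \<Rightarrow> nat \<Rightarrow> real"
  Dl_bu :: "nat \<Rightarrow> nat \<Rightarrow> nat \<Rightarrow> real^3"
  Dl_qu :: "nat \<Rightarrow> nat \<Rightarrow> nat \<Rightarrow> real^3"
  Dl_bq :: "nat \<Rightarrow> nat \<Rightarrow> nat \<Rightarrow> real^3"
  Dl_bU :: "nat \<Rightarrow> nat \<Rightarrow> real^3"
  Dl_qU :: "nat \<Rightarrow> nat \<Rightarrow> real^3"
  dQs :: "3 \<Rightarrow> nat \<Rightarrow> real^3"             (* (d Q / d Phi_i) s_u *)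
  dnu_pU_b :: "nat \<Rightarrow> nat \<Rightarrow> real^3"       (* grad_{p_U} nu_{bU,k} *)
  dnu_pU_q :: "nat \<Rightarrow> nat \<Rightarrow> real^3"       (* grad_{p_U} nu_{qU,k} *)
  dnu_pb_bU :: "nat \<Rightarrow> nat \<Rightarrow> real^3"      (* grad_{pcheck_b} nu_{bU,k} *)
  dnu_pb_bq :: "nat \<Rightarrow> nat \<Rightarrow> nat \<Rightarrow> real^3" (* grad_{pcheck_b} nu_{bq,k} *)

definition omega_bU :: "sysdata \<Rightarrow> nat \<Rightarrow> nat \<Rightarrow> real" where
  "omega_bU S b k = (a1b S b k)\<^sup>2 + 2 * fo_bU S b k * a1b S b k * a2b S b k + (fo_bU S b k)\<^sup>2"

definition omega_qU :: "sysdata \<Rightarrow> nat \<Rightarrow> nat \<Rightarrow> real" where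
  "omega_qU S q k = (a1q S q k)\<^sup>2 + 2 * fo_qU S q k * a1q S q k * a2q S q k + (fo_qU S q k)\<^sup>2"

definition omega_bq :: "sysdata \<Rightarrow> nat \<Rightarrow> nat \<Rightarrow> nat \<Rightarrow> real" where
  "omega_bq S b q k = (a1q S q k)\<^sup>2 + 2 * fo_bq S b q k * a1q S q k * a2q S q k + (fo_bq S b q k)\<^sup>2"

definition gain_set :: "sysdata \<Rightarrow> par set" where
  "gain_set S =
     {GbU b u k | b u k. b < NB S \<and> u < NU S \<and> k < NK S} \<union>
     {GqU q u k | q u k. q < NQ S \<and> u < NU S \<and> k < NK S} \<union>
     {Gbq b q k | b q k. b < NB S \<and> q < NQ S \<and> k < NK S}"

definition offset_set :: "sysdata \<Rightarrow> par set" where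
  "offset_set S = {DbU b | b. b < NB S} \<union> {EbU b | b. b < NB S} \<union> {DQU, EQU} \<union>
     {DbQ b | b. b < NB S} \<union> {EbQ b | b. b < NB S}"

definition kappa1 :: "sysdata \<Rightarrow> par set" where
  "kappa1 S = range PU \<union> range VU \<union> range PhiU \<union>
     {Pb b c | b c. b < NB S} \<union> {Vb b c | b c. b < NB S}"

text \<open>nuisance parameters: all gains and all time/frequency offsets\<close>
definition kappa2 :: "sysdata \<Rightarrow> par set" where
  "kappa2 S = gain_set S \<union> offset_set S"

definition kappa :: "sysdata \<Rightarrow> par set" where
  "kappa S = kappa1 S \<union> kappa2 S"

definition eta :: "sysdata \<Rightarrow> par set" where
  "eta S =
     {TbU b u k | b u k. b < NB S \<and> u < NU S \<and> k < NK S} \<union>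
     {NbU b k | b k. b < NB S \<and> k < NK S} \<union>
     {TqU q u k | q u k. q < NQ S \<and> u < NU S \<and> k < NK S} \<union>
     {NqU q k | q k. q < NQ S \<and> k < NK S} \<union>
     {Tbq b q k | b q k. b < NB S \<and> q < NQ S \<and> k < NK S} \<union>
     {Nbq b q k | b q k. b < NB S \<and> q < NQ S \<and> k < NK S} \<union>
     gain_set S \<union> offset_set S"

text \<open>Contribution of one observation with delay t, Doppler n, time offset d,
  frequency offset e, gain g, SNR snr, omega om, RMS duration ao, gain term gt.\<close>
definition obs :: "par \<Rightarrow> par \<Rightarrow> par \<Rightarrow> par \<Rightarrow> par \<Rightarrow> real \<Rightarrow> real \<Rightarrow> real \<Rightarrow> real \<Rightarrow> real
                    \<Rightarrow> par \<Rightarrow> par \<Rightarrow> real" where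
  "obs t n d e g snr om ao gt f x y =
    (if (x = t \<and> y = t) \<or> (x = d \<and> y = d) then snr * om
     else if (x = t \<and> y = d) \<or> (x = d \<and> y = t) then - (snr * om)
     else if x = n \<and> y = n then snr * f\<^sup>2 * ao\<^sup>2 / 2
     else if (x = n \<and> y = e) \<or> (x = e \<and> y = n) then - (snr * f * ao\<^sup>2 / 2)
     else if x = e \<and> y = e then snr * ao\<^sup>2 / 2
     else if x = g \<and> y = g then gt
     else 0)"

definition Jeta :: "sysdata \<Rightarrow> par \<Rightarrow> par \<Rightarrow> real" where
  "Jeta S x y =
     (\<Sum>b<NB S. \<Sum>u<NU S. \<Sum>k<NK S.
        obs (TbU b u k) (NbU b k) (DbU b) (EbU b) (GbU b u k)
            (snr_bu S b u k) (omega_bU S b k) (ao_bu S b u k) (gt_bu S b u k) (fc S) x y)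
   + (\<Sum>q<NQ S. \<Sum>u<NU S. \<Sum>k<NK S.
        obs (TqU q u k) (NqU q k) DQU EQU (GqU q u k)
            (snr_qu S q u k) (omega_qU S q k) (ao_qu S q u k) (gt_qu S q u k) (fc S) x y)
   + (\<Sum>b<NB S. \<Sum>q<NQ S. \<Sum>k<NK S.
        obs (Tbq b q k) (Nbq b q k) (DbQ b) (EbQ b) (Gbq b q k)
            (snr_bq S b q k) (omega_bq S b q k) (ao_bq S b q k) (gt_bq S b q k) (fc S) x y)"

definition gradPhi_tau_bu :: "sysdata \<Rightarrow> nat \<Rightarrow> nat \<Rightarrow> nat \<Rightarrow> real^3" where
  "gradPhi_tau_bu S b u k = (\<chi> i. (Dl_bu S b u k \<bullet> dQs S i u) / cl S)"

definition gradPhi_tau_qu :: "sysdata \<Rightarrow> nat \<Rightarrow> nat \<Rightarrow> nat \<Rightarrow> real^3" where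
  "gradPhi_tau_qu S q u k = (\<chi> i. (Dl_qu S q u k \<bullet> dQs S i u) / cl S)"

definition Ups :: "sysdata \<Rightarrow> par \<Rightarrow> par \<Rightarrow> real" where
  "Ups S x e = (case x of
     PU c \<Rightarrow> (case e of
         TbU b u k \<Rightarrow> Dl_bu S b u k $ c / cl S
       | TqU q u k \<Rightarrow> Dl_qu S q u k $ c / cl S
       | NbU b k \<Rightarrow> dnu_pU_b S b k $ c
       | NqU q k \<Rightarrow> dnu_pU_q S q k $ c
       | _ \<Rightarrow> 0)
   | Pb b' c \<Rightarrow> (case e of
         TbU b u k \<Rightarrow> (if b = b' then - (Dl_bu S b u k $ c) / cl S else 0)
       | Tbq b q k \<Rightarrow> (if b = b' then - (Dl_bq S b q k $ c) / cl S else 0)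
       | NbU b k \<Rightarrow> (if b = b' then dnu_pb_bU S b k $ c else 0)
       | Nbq b q k \<Rightarrow> (if b = b' then dnu_pb_bq S b q k $ c else 0)
       | _ \<Rightarrow> 0)
   | VU c \<Rightarrow> (case e of
         TbU b u k \<Rightarrow> real k * dt S * Dl_bu S b u k $ c / cl S
       | TqU q u k \<Rightarrow> real k * dt S * Dl_qu S q u k $ c / cl S
       | NbU b k \<Rightarrow> - (Dl_bU S b k $ c) / cl S
       | NqU q k \<Rightarrow> - (Dl_qU S q k $ c) / cl S
       | _ \<Rightarrow> 0)
   | Vb b' c \<Rightarrow> (case e of
         TbU b u k \<Rightarrow> (if b = b' then - (real k * dt S * Dl_bu S b u k $ c) / cl S else 0)
       | Tbq b q k \<Rightarrow> (if b = b' then - (real k * dt S * Dl_bq S b q k $ c) / cl S else 0)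
       | NbU b k \<Rightarrow> (if b = b' then Dl_bU S b k $ c / cl S else 0)
       | Nbq b q k \<Rightarrow> (if b = b' then Dl_bq S b q k $ c / cl S else 0)
       | _ \<Rightarrow> 0)
   | PhiU i \<Rightarrow> (case e of
         TbU b u k \<Rightarrow> gradPhi_tau_bu S b u k $ i
       | TqU q u k \<Rightarrow> gradPhi_tau_qu S q u k $ i
       | _ \<Rightarrow> 0)
   | _ \<Rightarrow> (if x = e then 1 else 0))"

definition Jkappa :: "sysdata \<Rightarrow> par \<Rightarrow> par \<Rightarrow> real" where
  "Jkappa S x y = (\<Sum>e\<in>eta S. \<Sum>e'\<in>eta S. Ups S x e * Jeta S e e' * Ups S y e')"

definition inv_on :: "par set \<Rightarrow> (par \<Rightarrow> par \<Rightarrow> real) \<Rightarrow> par \<Rightarrow> par \<Rightarrow> real" where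
  "inv_on I A = (THE M.
      (\<forall>i\<in>I. \<forall>j\<in>I. (\<Sum>l\<in>I. A i l * M l j) = (if i = j then 1 else 0)) \<and>
      (\<forall>i\<in>I. \<forall>j\<in>I. (\<Sum>l\<in>I. M i l * A l j) = (if i = j then 1 else 0)) \<and>
      (\<forall>i j. i \<notin> I \<or> j \<notin> I \<longrightarrow> M i j = 0))"

text \<open>Loss matrix J^nu = J_{k1,k2} J_{k2}^{-1} J_{k1,k2}^T; G(x,y) is its (x,y) entry.\<close>
definition Jnu :: "sysdata \<Rightarrow> par \<Rightarrow> par \<Rightarrow> real" where
  "Jnu S x y = (let K2 = kappa2 S; M = inv_on K2 (Jkappa S) in
     (\<Sum>m\<in>K2. \<Sum>n\<in>K2. Jkappa S x m * M m n * Jkappa S y n))"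

end

theory Submission
  imports Defs
begin

lemma sum_if_const: "(\<Sum>x\<in>A. if P then f x else 0) = (if P then (\<Sum>x\<in>A. f x) else (0::real))"
  by simp

lemma inv_on_diag:
  assumes fin: "finite I" and off: "\<And>i j. i\<in>I \<Longrightarrow> j\<in>I \<Longrightarrow> i\<noteq>j \<Longrightarrow> A i j = 0"
    and nz: "\<And>i. i\<in>I \<Longrightarrow> A i i \<noteq> 0"
  shows "inv_on I A = (\<lambda>i j. if i\<in>I \<and> j\<in>I \<and> i=j then 1 / A i i else 0)"
  unfolding inv_on_def
proof (rule the_equality)
  have s1: "(\<Sum>l\<in>I. A i l * f l) = A i i * f i" if "i\<in>I" for i f
  proof -
    have "(\<Sum>l\<in>I. A i l * f l) = (\<Sum>l\<in>I. if i = l then A i i * f i else 0)"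
      by (rule sum.cong) (use off that in auto)
    then show ?thesis using fin that by simp
  qed
  have s2: "(\<Sum>l\<in>I. f l * A l j) = f j * A j j" if "j\<in>I" for j f
  proof -
    have "(\<Sum>l\<in>I. f l * A l j) = (\<Sum>l\<in>I. if j = l then f j * A j j else 0)"
      by (rule sum.cong) (use off that in auto)
    then show ?thesis using fin that by simp
  qed
  show "(\<forall>i\<in>I. \<forall>j\<in>I. (\<Sum>l\<in>I. A i l * (if l\<in>I \<and> j\<in>I \<and> l=j then 1 / A l l else 0)) = (if i = j then 1 else 0)) \<and>
    (\<forall>i\<in>I. \<forall>j\<in>I. (\<Sum>l\<in>I. (if i\<in>I \<and> l\<in>I \<and> i=l then 1 / A i i else 0) * A l j) = (if i = j then 1 else 0)) \<and>
    (\<forall>i j. i \<notin> I \<or> j \<notin> I \<longrightarrow> (if i\<in>I \<and> j\<in>I \<and> i=j then 1 / A i i else 0) = 0)"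
    by (auto simp: s1 s2 nz)
  fix M assume h: "(\<forall>i\<in>I. \<forall>j\<in>I. (\<Sum>l\<in>I. A i l * M l j) = (if i = j then 1 else 0)) \<and>
      (\<forall>i\<in>I. \<forall>j\<in>I. (\<Sum>l\<in>I. M i l * A l j) = (if i = j then 1 else 0)) \<and>
      (\<forall>i j. i \<notin> I \<or> j \<notin> I \<longrightarrow> M i j = 0)"
  show "M = (\<lambda>i j. if i\<in>I \<and> j\<in>I \<and> i=j then 1 / A i i else 0)"
  proof (intro ext)
    fix i j
    show "M i j = (if i\<in>I \<and> j\<in>I \<and> i=j then 1 / A i i else 0)"
    proof (cases "i\<in>I \<and> j\<in>I")
      case True
      then have "A i i * M i j = (if i = j then 1 else 0)" using h s1[of i "\<lambda>l. M l j"] by auto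
      then show ?thesis using True nz[of i] by (auto simp: field_simps)
    next
      case False then show ?thesis using h by auto
    qed
  qed
qed

definition nuis :: "par \<Rightarrow> bool" where
  "nuis p = (case p of GbU _ _ _ \<Rightarrow> True | GqU _ _ _ \<Rightarrow> True | Gbq _ _ _ \<Rightarrow> True
     | DbU _ \<Rightarrow> True | EbU _ \<Rightarrow> True | DQU \<Rightarrow> True | EQU \<Rightarrow> True | DbQ _ \<Rightarrow> True | EbQ _ \<Rightarrow> True
     | _ \<Rightarrow> False)"

lemma nuis_kappa2: "x \<in> kappa2 S \<Longrightarrow> nuis x"
  by (auto simp: kappa2_def gain_set_def offset_set_def nuis_def)

lemma nuis_neq [simp]: "nuis x \<Longrightarrow> x \<noteq> TbU a b c" "nuis x \<Longrightarrow> x \<noteq> TqU a b c" "nuis x \<Longrightarrow> x \<noteq> Tbq a b c"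
  "nuis x \<Longrightarrow> x \<noteq> NbU a b" "nuis x \<Longrightarrow> x \<noteq> NqU a b" "nuis x \<Longrightarrow> x \<noteq> Nbq a b c"
  by (auto simp: nuis_def)

lemma Ups_nuis: "nuis x \<Longrightarrow> Ups S x e = (if x = e then 1 else 0)"
  by (cases x) (auto simp: nuis_def Ups_def)

lemma obs_nuis: "x \<noteq> t \<Longrightarrow> x \<noteq> n \<Longrightarrow> y \<noteq> t \<Longrightarrow> y \<noteq> n \<Longrightarrow>
  obs t n d e g snr om ao gt f x y = (if x = d \<and> y = d then snr * om else if x = e \<and> y = e then snr * ao\<^sup>2 / 2
     else if x = g \<and> y = g then gt else 0)"
  by (auto simp: obs_def)

lemma fin_gain: "finite (gain_set S)"
proof -
  have "gain_set S \<subseteq> (\<lambda>(b,u,k). GbU b u k) ` ({..<NB S} \<times> {..<NU S} \<times> {..<NK S})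
     \<union> (\<lambda>(b,u,k). GqU b u k) ` ({..<NQ S} \<times> {..<NU S} \<times> {..<NK S})
     \<union> (\<lambda>(b,u,k). Gbq b u k) ` ({..<NB S} \<times> {..<NQ S} \<times> {..<NK S})"
    by (auto simp: gain_set_def image_iff)
  then show ?thesis by (rule finite_subset) auto
qed

lemma fin_off: "finite (offset_set S)"
proof -
  have "offset_set S \<subseteq> DbU ` {..<NB S} \<union> EbU ` {..<NB S} \<union> {DQU, EQU} \<union> DbQ ` {..<NB S} \<union> EbQ ` {..<NB S}"
    by (auto simp: offset_set_def)
  then show ?thesis by (rule finite_subset) auto
qed

lemma fin_k2: "finite (kappa2 S)" by (simp add: kappa2_def fin_gain fin_off)

lemma k2_eta: "kappa2 S \<subseteq> eta S" by (auto simp: kappa2_def eta_def)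

lemma fin_eta: "finite (eta S)"
proof -
  have "eta S \<subseteq> (\<lambda>(b,u,k). TbU b u k) ` ({..<NB S} \<times> {..<NU S} \<times> {..<NK S})
     \<union> (\<lambda>(b,k). NbU b k) ` ({..<NB S} \<times> {..<NK S})
     \<union> (\<lambda>(b,u,k). TqU b u k) ` ({..<NQ S} \<times> {..<NU S} \<times> {..<NK S})
     \<union> (\<lambda>(b,k). NqU b k) ` ({..<NQ S} \<times> {..<NK S})
     \<union> (\<lambda>(b,u,k). Tbq b u k) ` ({..<NB S} \<times> {..<NQ S} \<times> {..<NK S})
     \<union> (\<lambda>(b,u,k). Nbq b u k) ` ({..<NB S} \<times> {..<NQ S} \<times> {..<NK S})
     \<union> gain_set S \<union> offset_set S"
    by (auto simp: eta_def image_iff)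
  then show ?thesis by (rule finite_subset) (auto simp: fin_gain fin_off)
qed

lemma double_delta: assumes "finite E" "x \<in> E" "y \<in> E"
  shows "(\<Sum>e\<in>E. \<Sum>e'\<in>E. (if x = e then 1 else 0) * J e e' * (if y = e' then 1 else (0::real))) = J x y"
proof -
  have "\<And>e e'. (if x = e then 1 else 0) * J e e' * (if y = e' then 1 else (0::real)) = (if e = x then (if e' = y then J x y else 0) else 0)"
    by auto
  moreover have "\<And>e. (\<Sum>e'\<in>E. if e = x then (if e' = y then J x y else 0) else 0) = (if e = x then J x y else 0)"
    using assms by (simp add: sum.delta')
  ultimately show ?thesis using assms by (simp add: sum.delta')
qed

lemma Jk_k2: assumes "x \<in> kappa2 S" "y \<in> kappa2 S" shows "Jkappa S x y = Jeta S x y"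
proof -
  have xe: "x \<in> eta S" "y \<in> eta S" using assms k2_eta by auto
  show ?thesis unfolding Jkappa_def
    using nuis_kappa2[OF assms(1)] nuis_kappa2[OF assms(2)] xe
    by (simp only: Ups_nuis double_delta fin_eta)
qed

lemma Jeta_off: assumes "nuis x" "nuis y" "x \<noteq> y" shows "Jeta S x y = 0"
proof -
  have o: "obs t n d e g snr om ao gt f x y = 0" if "x \<noteq> t" "x \<noteq> n" "y \<noteq> t" "y \<noteq> n" for t n d e g snr om ao gt f
    using that assms(3) by (auto simp: obs_def)
  show ?thesis using assms by (simp add: Jeta_def o)
qed

lemma pos3: fixes f :: "nat \<Rightarrow> nat \<Rightarrow> nat \<Rightarrow> real"
  assumes "\<And>a b c. a<A \<Longrightarrow> b<B \<Longrightarrow> c<C \<Longrightarrow> f a b c \<ge> 0"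
    and "a0<A" "b0<B" "c0<C" "f a0 b0 c0 > 0"
  shows "(\<Sum>a<A. \<Sum>b<B. \<Sum>c<C. f a b c) > 0"
  apply (rule sum_pos2[of _ a0]) using assms
  apply (auto intro!: sum_nonneg)
  apply (rule sum_pos2[of _ b0]) apply (auto intro!: sum_nonneg)
  apply (rule sum_pos2[of _ c0]) apply auto
  done

lemma nn3: fixes f :: "nat \<Rightarrow> nat \<Rightarrow> nat \<Rightarrow> real"
  assumes "\<And>a b c. a<A \<Longrightarrow> b<B \<Longrightarrow> c<C \<Longrightarrow> f a b c \<ge> 0"
  shows "(\<Sum>a<A. \<Sum>b<B. \<Sum>c<C. f a b c) \<ge> 0"
  using assms by (auto intro!: sum_nonneg)

lemma Jeta_pos:
  fixes S :: sysdata
  assumes x: "x \<in> kappa2 S"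
    and "NB S \<ge> 1" "NQ S \<ge> 1" "NU S \<ge> 1" "NK S \<ge> 1"
    and "\<And>b u k. snr_bu S b u k > 0" "\<And>q u k. snr_qu S q u k > 0" "\<And>b q k. snr_bq S b q k > 0"
    and "\<And>b k. omega_bU S b k > 0" "\<And>q k. omega_qU S q k > 0" "\<And>b q k. omega_bq S b q k > 0"
    and "\<And>b u k. ao_bu S b u k > 0" "\<And>q u k. ao_qu S q u k > 0" "\<And>b q k. ao_bq S b q k > 0"
    and "\<And>b u k. gt_bu S b u k > 0" "\<And>q u k. gt_qu S q u k > 0" "\<And>b q k. gt_bq S b q k > 0"
  shows "Jeta S x x > 0"
proof -
  have nx: "nuis x" using x by (rule nuis_kappa2)
  define f1 where "f1 b u k = obs (TbU b u k) (NbU b k) (DbU b) (EbU b) (GbU b u k)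
            (snr_bu S b u k) (omega_bU S b k) (ao_bu S b u k) (gt_bu S b u k) (fc S) x x" for b u k
  define f2 where "f2 q u k = obs (TqU q u k) (NqU q k) DQU EQU (GqU q u k)
            (snr_qu S q u k) (omega_qU S q k) (ao_qu S q u k) (gt_qu S q u k) (fc S) x x" for q u k
  define f3 where "f3 b q k = obs (Tbq b q k) (Nbq b q k) (DbQ b) (EbQ b) (Gbq b q k)
            (snr_bq S b q k) (omega_bq S b q k) (ao_bq S b q k) (gt_bq S b q k) (fc S) x x" for b q k
  have J: "Jeta S x x = (\<Sum>b<NB S. \<Sum>u<NU S. \<Sum>k<NK S. f1 b u k) + (\<Sum>b<NQ S. \<Sum>u<NU S. \<Sum>k<NK S. f2 b u k)
     + (\<Sum>b<NB S. \<Sum>u<NQ S. \<Sum>k<NK S. f3 b u k)"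
    unfolding Jeta_def f1_def f2_def f3_def ..
  have f1e: "f1 b u k = (if x = DbU b then snr_bu S b u k * omega_bU S b k else if x = EbU b then snr_bu S b u k * (ao_bu S b u k)\<^sup>2 / 2
     else if x = GbU b u k then gt_bu S b u k else 0)" for b u k
    unfolding f1_def using nx by (simp add: obs_nuis)
  have f2e: "f2 b u k = (if x = DQU then snr_qu S b u k * omega_qU S b k else if x = EQU then snr_qu S b u k * (ao_qu S b u k)\<^sup>2 / 2
     else if x = GqU b u k then gt_qu S b u k else 0)" for b u k
    unfolding f2_def using nx by (simp add: obs_nuis)
  have f3e: "f3 b u k = (if x = DbQ b then snr_bq S b u k * omega_bq S b u k else if x = EbQ b then snr_bq S b u k * (ao_bq S b u k)\<^sup>2 / 2
     else if x = Gbq b u k then gt_bq S b u k else 0)" for b u k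
    unfolding f3_def using nx by (simp add: obs_nuis)
  have p1: "f1 b u k \<ge> 0" for b u k unfolding f1e using assms
    by (auto intro!: less_imp_le mult_pos_pos divide_pos_pos zero_less_power)
  have p2: "f2 b u k \<ge> 0" for b u k unfolding f2e using assms
    by (auto intro!: less_imp_le mult_pos_pos divide_pos_pos zero_less_power)
  have p3: "f3 b u k \<ge> 0" for b u k unfolding f3e using assms
    by (auto intro!: less_imp_le mult_pos_pos divide_pos_pos zero_less_power)
  have n1: "(\<Sum>b<NB S. \<Sum>u<NU S. \<Sum>k<NK S. f1 b u k) \<ge> 0" by (rule nn3) (rule p1)
  have n2: "(\<Sum>b<NQ S. \<Sum>u<NU S. \<Sum>k<NK S. f2 b u k) \<ge> 0" by (rule nn3) (rule p2)
  have n3: "(\<Sum>b<NB S. \<Sum>u<NQ S. \<Sum>k<NK S. f3 b u k) \<ge> 0" by (rule nn3) (rule p3)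
  have "(\<Sum>b<NB S. \<Sum>u<NU S. \<Sum>k<NK S. f1 b u k) > 0 \<or> (\<Sum>b<NQ S. \<Sum>u<NU S. \<Sum>k<NK S. f2 b u k) > 0
     \<or> (\<Sum>b<NB S. \<Sum>u<NQ S. \<Sum>k<NK S. f3 b u k) > 0"
    using x unfolding kappa2_def gain_set_def offset_set_def
  proof (elim UnE CollectE exE conjE insertE emptyE)
    fix b u k assume "x = GbU b u k" "b < NB S" "u < NU S" "k < NK S"
    then show ?thesis using assms by (intro disjI1 pos3[of _ _ _ f1 b u k] p1) (auto simp: f1e)
  next
    fix b u k assume "x = GqU b u k" "b < NQ S" "u < NU S" "k < NK S"
    then show ?thesis using assms by (intro disjI2 disjI1 pos3[of _ _ _ f2 b u k] p2) (auto simp: f2e)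
  next
    fix b u k assume "x = Gbq b u k" "b < NB S" "u < NQ S" "k < NK S"
    then show ?thesis using assms by (intro disjI2 pos3[of _ _ _ f3 b u k] p3) (auto simp: f3e)
  next
    fix b assume "x = DbU b" "b < NB S"
    then show ?thesis using assms by (intro disjI1 pos3[of _ _ _ f1 b 0 0] p1) (auto simp: f1e)
  next
    fix b assume "x = EbU b" "b < NB S"
    then show ?thesis using assms by (intro disjI1 pos3[of _ _ _ f1 b 0 0] p1) (auto simp: f1e intro!: mult_pos_pos zero_less_power)
  next
    assume "x = DQU"
    then show ?thesis using assms by (intro disjI2 disjI1 pos3[of _ _ _ f2 0 0 0] p2) (auto simp: f2e)
  next
    assume "x = EQU"
    then show ?thesis using assms by (intro disjI2 disjI1 pos3[of _ _ _ f2 0 0 0] p2) (auto simp: f2e intro!: mult_pos_pos zero_less_power)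
  next
    fix b assume "x = DbQ b" "b < NB S"
    then show ?thesis using assms by (intro disjI2 pos3[of _ _ _ f3 b 0 0] p3) (auto simp: f3e)
  next
    fix b assume "x = EbQ b" "b < NB S"
    then show ?thesis using assms by (intro disjI2 pos3[of _ _ _ f3 b 0 0] p3) (auto simp: f3e intro!: mult_pos_pos zero_less_power)
  qed
  then show ?thesis unfolding J using n1 n2 n3 by linarith
qed


lemma pw1: "nuis m \<Longrightarrow> Ups S (PhiU i) e * obs (TbU b u k) (NbU b k) (DbU b) (EbU b) (GbU b u k) snr om ao gt f e m
  = (if e = TbU b u k then (if m = DbU b then - (gradPhi_tau_bu S b u k $ i * (snr * om)) else 0) else 0)"
  by (cases e) (auto simp: Ups_def obs_def)

lemma pw2: "nuis m \<Longrightarrow> Ups S (PhiU i) e * obs (TqU q u k) (NqU q k) DQU EQU (GqU q u k) snr om ao gt f e m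
  = (if e = TqU q u k then (if m = DQU then - (gradPhi_tau_qu S q u k $ i * (snr * om)) else 0) else 0)"
  by (cases e) (auto simp: Ups_def obs_def)

lemma pw3: "nuis m \<Longrightarrow> Ups S (PhiU i) e * obs (Tbq b q k) (Nbq b q k) (DbQ b) (EbQ b) (Gbq b q k) snr om ao gt f e m = 0"
  by (cases e) (auto simp: Ups_def obs_def)

lemma swap_delta:
  fixes c :: "nat \<Rightarrow> nat \<Rightarrow> nat \<Rightarrow> real"
  assumes "finite E" "\<And>b u k. b<B \<Longrightarrow> u<U \<Longrightarrow> k<K \<Longrightarrow> T b u k \<in> E"
  shows "(\<Sum>e\<in>E. \<Sum>b<B. \<Sum>u<U. \<Sum>k<K. if e = T b u k then c b u k else 0) = (\<Sum>b<B. \<Sum>u<U. \<Sum>k<K. c b u k)"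
proof -
  have "(\<Sum>e\<in>E. \<Sum>b<B. \<Sum>u<U. \<Sum>k<K. if e = T b u k then c b u k else 0)
      = (\<Sum>b<B. \<Sum>u<U. \<Sum>k<K. \<Sum>e\<in>E. if e = T b u k then c b u k else 0)"
    by (subst sum.swap) (simp add: sum.swap[of _ E])
  also have "\<dots> = (\<Sum>b<B. \<Sum>u<U. \<Sum>k<K. c b u k)"
    using assms by (simp add: sum.delta)
  finally show ?thesis .
qed

lemma single_delta: assumes "finite E" "y \<in> E"
  shows "(\<Sum>e\<in>E. \<Sum>e'\<in>E. a e * J e e' * (if y = e' then 1 else (0::real))) = (\<Sum>e\<in>E. a e * J e y)"
  using assms by (simp add: if_distrib sum.delta cong: if_cong)

lemma Jk_Phi: assumes m: "m \<in> kappa2 S"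
  shows "Jkappa S (PhiU i) m = (\<Sum>b<NB S. \<Sum>u<NU S. \<Sum>k<NK S. if m = DbU b then - (gradPhi_tau_bu S b u k $ i * (snr_bu S b u k * omega_bU S b k)) else 0)
    + (\<Sum>q<NQ S. \<Sum>u<NU S. \<Sum>k<NK S. if m = DQU then - (gradPhi_tau_qu S q u k $ i * (snr_qu S q u k * omega_qU S q k)) else 0)" (is "_ = ?R")
proof -
  have nm: "nuis m" using m by (rule nuis_kappa2)
  have me: "m \<in> eta S" using m k2_eta by auto
  have "Jkappa S (PhiU i) m = (\<Sum>e\<in>eta S. Ups S (PhiU i) e * Jeta S e m)"
    unfolding Jkappa_def using nm me by (simp only: Ups_nuis[OF nm] single_delta fin_eta)
  also have "\<dots> = (\<Sum>e\<in>eta S. (\<Sum>b<NB S. \<Sum>u<NU S. \<Sum>k<NK S. if e = TbU b u k then (if m = DbU b then - (gradPhi_tau_bu S b u k $ i * (snr_bu S b u k * omega_bU S b k)) else 0) else 0)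
    + (\<Sum>q<NQ S. \<Sum>u<NU S. \<Sum>k<NK S. if e = TqU q u k then (if m = DQU then - (gradPhi_tau_qu S q u k $ i * (snr_qu S q u k * omega_qU S q k)) else 0) else 0))"
    unfolding Jeta_def by (simp only: distrib_left sum_distrib_left pw1[OF nm] pw2[OF nm] pw3[OF nm] sum.neutral_const add_0_right)
  also have "\<dots> = ?R"
    apply (subst sum.distrib)
    apply (subst swap_delta[OF fin_eta]) apply (force simp: eta_def)
    apply (subst swap_delta[OF fin_eta]) apply (force simp: eta_def)
    ..
  finally show ?thesis .
qed


definition al :: "sysdata \<Rightarrow> nat \<Rightarrow> 3 \<Rightarrow> real" where
  "al S b i = (\<Sum>u<NU S. \<Sum>k<NK S. gradPhi_tau_bu S b u k $ i * (snr_bu S b u k * omega_bU S b k))"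
definition be :: "sysdata \<Rightarrow> 3 \<Rightarrow> real" where
  "be S i = (\<Sum>q<NQ S. \<Sum>u<NU S. \<Sum>k<NK S. gradPhi_tau_qu S q u k $ i * (snr_qu S q u k * omega_qU S q k))"

lemma neg2: "(\<Sum>u\<in>A. \<Sum>k\<in>B. - f u k) = - (\<Sum>u\<in>A. \<Sum>k\<in>B. (f u k::real))"
  by (simp add: sum_negf)
lemma neg3: "(\<Sum>q\<in>C. \<Sum>u\<in>A. \<Sum>k\<in>B. - f q u k) = - (\<Sum>q\<in>C. \<Sum>u\<in>A. \<Sum>k\<in>B. (f q u k::real))"
  by (simp add: sum_negf)

lemma Jk_Phi2: "m \<in> kappa2 S \<Longrightarrow> Jkappa S (PhiU i) m = (\<Sum>b<NB S. if m = DbU b then - al S b i else 0) + (if m = DQU then - be S i else 0)"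
  unfolding al_def be_def
  apply (simp only: Jk_Phi sum_if_const neg2 neg3)
  apply (simp add: sum_negf)
  done

lemma "DbU b \<noteq> EbU c" by simp
lemma D_b: "b < NB S \<Longrightarrow> Jeta S (DbU b) (DbU b) = (\<Sum>u<NU S. \<Sum>k<NK S. snr_bu S b u k * omega_bU S b k)"
  by (simp add: Jeta_def obs_nuis nuis_def cong: if_cong) (simp add: sum_if_const)

lemma D_Q: "Jeta S DQU DQU = (\<Sum>q<NQ S. \<Sum>u<NU S. \<Sum>k<NK S. snr_qu S q u k * omega_qU S q k)"
  by (simp add: Jeta_def obs_nuis nuis_def)


theorem lemma25:
  fixes S :: sysdata
  assumes "NB S \<ge> 1" "NQ S \<ge> 1" "NU S \<ge> 1" "NK S \<ge> 1"
    and "cl S > 0"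
    and "\<And>b u k. snr_bu S b u k > 0" "\<And>q u k. snr_qu S q u k > 0" "\<And>b q k. snr_bq S b q k > 0"
    and "\<And>b k. omega_bU S b k > 0" "\<And>q k. omega_qU S q k > 0" "\<And>b q k. omega_bq S b q k > 0"
    and "\<And>b u k. ao_bu S b u k > 0" "\<And>q u k. ao_qu S q u k > 0" "\<And>b q k. ao_bq S b q k > 0"
    and "\<And>b u k. gt_bu S b u k > 0" "\<And>q u k. gt_qu S q u k > 0" "\<And>b q k. gt_bq S b q k > 0"
  shows "\<forall>i j :: 3.
     Jnu S (PhiU i) (PhiU j) =
       (\<Sum>b<NB S.
          (let a_b = (\<Sum>k<NK S. \<Sum>u<NU S. (snr_bu S b u k * omega_bU S b k) *\<^sub>R gradPhi_tau_bu S b u k)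
           in a_b $ i * a_b $ j / (\<Sum>u<NU S. \<Sum>k<NK S. snr_bu S b u k * omega_bU S b k)))
     + (let a_Q = (\<Sum>q<NQ S. \<Sum>k<NK S. \<Sum>u<NU S. (snr_qu S q u k * omega_qU S q k) *\<^sub>R gradPhi_tau_qu S q u k)
        in a_Q $ i * a_Q $ j / (\<Sum>q<NQ S. \<Sum>u<NU S. \<Sum>k<NK S. snr_qu S q u k * omega_qU S q k))"
proof (intro allI)
  fix i j :: 3
  let ?R = "(\<Sum>b<NB S.
          (let a_b = (\<Sum>k<NK S. \<Sum>u<NU S. (snr_bu S b u k * omega_bU S b k) *\<^sub>R gradPhi_tau_bu S b u k)
           in a_b $ i * a_b $ j / (\<Sum>u<NU S. \<Sum>k<NK S. snr_bu S b u k * omega_bU S b k)))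
     + (let a_Q = (\<Sum>q<NQ S. \<Sum>k<NK S. \<Sum>u<NU S. (snr_qu S q u k * omega_qU S q k) *\<^sub>R gradPhi_tau_qu S q u k)
        in a_Q $ i * a_Q $ j / (\<Sum>q<NQ S. \<Sum>u<NU S. \<Sum>k<NK S. snr_qu S q u k * omega_qU S q k))"
  let ?K = "kappa2 S"
  let ?D = "\<lambda>m. Jkappa S m m"
  have pos: "?D m > 0" if "m \<in> ?K" for m
    using Jeta_pos[OF that assms(1-4) assms(6-17)] Jk_k2[OF that that] by simp
  have off: "Jkappa S m n = 0" if "m \<in> ?K" "n \<in> ?K" "m \<noteq> n" for m n
    using Jk_k2[OF that(1,2)] Jeta_off[OF nuis_kappa2[OF that(1)] nuis_kappa2[OF that(2)] that(3)] by simp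
  have M: "inv_on ?K (Jkappa S) = (\<lambda>m n. if m\<in>?K \<and> n\<in>?K \<and> m=n then 1 / ?D m else 0)"
    by (rule inv_on_diag[OF fin_k2 off]) (use pos in force)+
  define F where "F i m = (\<Sum>b<NB S. if m = DbU b then - al S b i else 0) + (if m = DQU then - be S i else 0)" for i m
  define DB where "DB b = (\<Sum>u<NU S. \<Sum>k<NK S. snr_bu S b u k * omega_bU S b k)" for b
  define DQ where "DQ = (\<Sum>q<NQ S. \<Sum>u<NU S. \<Sum>k<NK S. snr_qu S q u k * omega_qU S q k)"
  have "Jnu S (PhiU i) (PhiU j) = (\<Sum>m\<in>?K. \<Sum>n\<in>?K. F i m * (if m = n then 1 / ?D m else 0) * F j n)"
    unfolding Jnu_def Let_def M
    by (intro sum.cong refl) (simp add: Jk_Phi2 F_def)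
  also have "\<dots> = (\<Sum>m\<in>?K. F i m * F j m / ?D m)"
  proof (intro sum.cong refl)
    fix m assume "m \<in> ?K"
    have "\<And>n. F i m * (if m = n then 1 / ?D m else 0) * F j n = (if m = n then F i m * F j m / ?D m else 0)"
      by auto
    then show "(\<Sum>n\<in>?K. F i m * (if m = n then 1 / ?D m else 0) * F j n) = F i m * F j m / ?D m"
      using \<open>m \<in> ?K\<close> by (simp add: sum.delta fin_k2)
  qed
  also have "\<dots> = (\<Sum>m\<in>?K. (\<Sum>b<NB S. if m = DbU b then al S b i * al S b j / DB b else 0)
        + (if m = DQU then be S i * be S j / DQ else 0))"
  proof (intro sum.cong refl)
    fix m assume m: "m \<in> ?K"
    show "F i m * F j m / ?D m = (\<Sum>b<NB S. if m = DbU b then al S b i * al S b j / DB b else 0)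
        + (if m = DQU then be S i * be S j / DQ else 0)"
    proof (cases "\<exists>b. m = DbU b")
      case True
      then obtain b where b: "m = DbU b" by blast
      then have "b < NB S" using m by (auto simp: kappa2_def gain_set_def offset_set_def)
      then show ?thesis using b Jk_k2[OF m m] D_b[of b S]
        by (simp add: F_def DB_def sum.delta if_distrib cong: if_cong)
    next
      case False
      then show ?thesis using Jk_k2[OF m m] D_Q[of S]
        by (simp add: F_def DQ_def sum.delta if_distrib cong: if_cong)
    qed
  qed
  also have "\<dots> = (\<Sum>b<NB S. al S b i * al S b j / DB b) + be S i * be S j / DQ"
  proof -
    have "DQU \<in> ?K" by (simp add: kappa2_def offset_set_def)
    moreover have "(\<Sum>m\<in>?K. \<Sum>b<NB S. if m = DbU b then al S b i * al S b j / DB b else 0)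
       = (\<Sum>b<NB S. \<Sum>m\<in>?K. if m = DbU b then al S b i * al S b j / DB b else 0)"
      by (rule sum.swap)
    moreover have "DbU b \<in> ?K" if "b < NB S" for b using that by (simp add: kappa2_def offset_set_def)
    ultimately show ?thesis by (simp add: sum.distrib sum.delta fin_k2)
  qed
  also have "\<dots> = ?R"
  proof -
    have a: "(\<Sum>k<NK S. \<Sum>u<NU S. (snr_bu S b u k * omega_bU S b k) *\<^sub>R gradPhi_tau_bu S b u k) $ l = al S b l" for b l
      unfolding al_def by (simp add: sum.swap[of _ "{..<NK S}"] mult.commute)
    have q: "(\<Sum>q<NQ S. \<Sum>k<NK S. \<Sum>u<NU S. (snr_qu S q u k * omega_qU S q k) *\<^sub>R gradPhi_tau_qu S q u k) $ l = be S l" for l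
      unfolding be_def by (simp add: sum.swap[of _ "{..<NK S}"] mult.commute)
    show ?thesis by (simp only: Let_def a q DB_def DQ_def)
  qed
  finally show "Jnu S (PhiU i) (PhiU j) = ?R" .
qed

end
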